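(* Let $d\ge2$. (1) If $y,y_0\in Y_d$ are such that $\tau_{y_0}\in\overline{A_{d+1}\tau_y}$ and $y_0$ is L, then $y$ is L. (2) If $x,x_0\in X_d$ are such that $x_0\in\overline{A_dx}$ and $x_0$ is GL, then $x$ is GL.
   Context: $X_k$ is the space of unimodular lattices in $\mathbb{R}^k$ ($\cong SL_k(\mathbb{R})/SL_k(\mathbb{Z})$, coset of $g$ = lattice spanned by the columns of $g$), with quotient topology. $Y_d$ is the space of grids $x+v$ ($x\in X_d$, $v\in\mathbb{R}^d$). The embedding $\tau:Y_d\to X_{d+1}$ sends the grid $y=\bar g+v$ ($\bar g$ the lattice spanned by columns of $g\in SL_d(\mathbb{R})$) to the lattice $\tau_y=\begin{pmatrix} g& v\\0&1\end{pmatrix}SL_{d+1}(\mathbb{Z})$, i.e. $\tau_y=\{(u+nv,n)^t: u\in\bar g,\ n\in\mathbb{Z}\}$. $A_k$ is the group of positive diagonal $k\times k$ matrices of determinant one. For $w\in\mathbb{R}^d$, $N(w)=\prod_iw_i$; for a grid $y$, $N(y)=\inf\{|N(w)|:w\in y\}$ and $n(x+v)=x+nv$. A grid $y$ is L if $\inf_{n\neq0}|nN(ny)|=0$; a lattice $x\in X_d$ is GL if every grid $x+v$ ($v\in\mathbb{R}^d$) is L. *)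

theory Defs
  imports "HOL-Analysis.Analysis"
begin

definition quotient_topology :: "'a topology \<Rightarrow> ('a \<Rightarrow> 'b) \<Rightarrow> 'b topology" where
  "quotient_topology X q =
     topology (\<lambda>U. U \<subseteq> q ` topspace X \<and> openin X {x \<in> topspace X. q x \<in> U})"

lemma istopology_quotient:
  "istopology (\<lambda>U. U \<subseteq> q ` topspace X \<and> openin X {x \<in> topspace X. q x \<in> U})"
  unfolding istopology_def
proof (rule conjI)
  show "\<forall>S T. S \<subseteq> q ` topspace X \<and> openin X {x \<in> topspace X. q x \<in> S} \<longrightarrow>
      T \<subseteq> q ` topspace X \<and> openin X {x \<in> topspace X. q x \<in> T} \<longrightarrow>
      S \<inter> T \<subseteq> q ` topspace X \<and> openin X {x \<in> topspace X. q x \<in> S \<inter> T}"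
  proof (intro allI impI)
    fix S T assume S: "S \<subseteq> q ` topspace X \<and> openin X {x \<in> topspace X. q x \<in> S}"
      and T: "T \<subseteq> q ` topspace X \<and> openin X {x \<in> topspace X. q x \<in> T}"
    have eq: "{x \<in> topspace X. q x \<in> S \<inter> T} =
          {x \<in> topspace X. q x \<in> S} \<inter> {x \<in> topspace X. q x \<in> T}" by blast
    have "openin X ({x \<in> topspace X. q x \<in> S} \<inter> {x \<in> topspace X. q x \<in> T})"
      using S T by (intro openin_Int) simp_all
    then show "S \<inter> T \<subseteq> q ` topspace X \<and> openin X {x \<in> topspace X. q x \<in> S \<inter> T}"
      using S eq by (simp add: le_infI1)
  qed
next
  show "\<forall>K. (\<forall>U\<in>K. U \<subseteq> q ` topspace X \<and> openin X {x \<in> topspace X. q x \<in> U}) \<longrightarrow>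
      \<Union>K \<subseteq> q ` topspace X \<and> openin X {x \<in> topspace X. q x \<in> \<Union>K}"
  proof (intro allI impI)
    fix K assume K: "\<forall>U\<in>K. U \<subseteq> q ` topspace X \<and> openin X {x \<in> topspace X. q x \<in> U}"
    have eq: "{x \<in> topspace X. q x \<in> \<Union>K} = (\<Union>U\<in>K. {x \<in> topspace X. q x \<in> U})" by blast
    have "openin X (\<Union>U\<in>K. {x \<in> topspace X. q x \<in> U})"
      using K by (intro openin_Union) blast
    then have "openin X {x \<in> topspace X. q x \<in> \<Union>K}" using eq by simp
    moreover have "\<Union>K \<subseteq> q ` topspace X" using K by blast
    ultimately show "\<Union>K \<subseteq> q ` topspace X \<and> openin X {x \<in> topspace X. q x \<in> \<Union>K}" by blast
  qed
qed

lemma openin_quotient_topology: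
  "openin (quotient_topology X q) U \<longleftrightarrow>
     U \<subseteq> q ` topspace X \<and> openin X {x \<in> topspace X. q x \<in> U}"
  unfolding quotient_topology_def topology_inverse'[OF istopology_quotient] ..

definition lat_of :: "real^'k^'k \<Rightarrow> (real^'k) set" where
  "lat_of g = {g *v z | z. \<forall>i. z $ i \<in> \<int>}"

definition SLR :: "(real^'k^'k) set" where
  "SLR = {g. det g = 1}"

text \<open>X_k = SL_k(R)/SL_k(Z), with the quotient topology.\<close>
definition Xspace :: "(real^'k) set set" where
  "Xspace = lat_of ` SLR"

definition Xtop :: "(real^'k) set topology" where
  "Xtop = quotient_topology (subtopology euclidean SLR) lat_of"

definition Adiag :: "(real^'k^'k) set" where
  "Adiag = {(\<chi> i j. if i = j then a $ i else 0) | a. (\<forall>i. a $ i > 0) \<and> (\<Prod>i\<in>UNIV. a $ i) = 1}"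

definition act :: "real^'k^'k \<Rightarrow> (real^'k) set \<Rightarrow> (real^'k) set" where
  "act a x = (\<lambda>u. a *v u) ` x"

definition orbitA :: "(real^'k) set \<Rightarrow> (real^'k) set set" where
  "orbitA x = {act a x | a. a \<in> Adiag}"

definition grid :: "real^'d^'d \<Rightarrow> real^'d \<Rightarrow> (real^'d) set" where
  "grid g v = (\<lambda>u. u + v) ` lat_of g"

definition Nvec :: "real^'d \<Rightarrow> real" where
  "Nvec w = (\<Prod>i\<in>UNIV. w $ i)"

definition Ngrid :: "(real^'d) set \<Rightarrow> real" where
  "Ngrid y = Inf {\<bar>Nvec w\<bar> | w. w \<in> y}"

definition is_L :: "real^'d^'d \<Rightarrow> real^'d \<Rightarrow> bool" where
  "is_L g v \<longleftrightarrow> Inf {\<bar>real_of_int n * Ngrid (grid g (of_int n *\<^sub>R v))\<bar> | n::int. n \<noteq> 0} = 0"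

definition is_GL :: "(real^'d) set \<Rightarrow> bool" where
  "is_GL x \<longleftrightarrow> (\<forall>g v. det g = 1 \<and> lat_of g = x \<longrightarrow> is_L g v)"

text \<open>R^{d+1} is modelled as real^('d option); None is the last coordinate.\<close>
definition tau_mat :: "real^'d^'d \<Rightarrow> real^'d \<Rightarrow> real^('d option)^('d option)" where
  "tau_mat g v = (\<chi> i j. case i of
      Some a \<Rightarrow> (case j of Some b \<Rightarrow> g $ a $ b | None \<Rightarrow> v $ a)
    | None \<Rightarrow> (case j of Some b \<Rightarrow> 0 | None \<Rightarrow> 1))"

definition tau :: "real^'d^'d \<Rightarrow> real^'d \<Rightarrow> (real^('d option)) set" where
  "tau g v = lat_of (tau_mat g v)"

end

theory Submission
  imports Defs
begin

lemma act_lat: "act M (lat_of g) = lat_of (M ** g)"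
  unfolding act_def lat_of_def
  using matrix_vector_mul_assoc[of M g] by (auto simp: image_iff) metis

lemma mult_cont: "continuous_on UNIV (\<lambda>h::real^'n^'m. h ** (c::real^'p^'n))"
  unfolding matrix_matrix_mult_def by (intro continuous_intros)

lemma mvec_axis: "((g::real^'n^'m) *v axis j 1) $ i = g $ i $ j"
  by (simp add: matrix_vector_mult_basis column_def)

lemma axis_int: "(axis j (1::real)) $ i \<in> \<int>"
  by (simp add: axis_def)

lemma lat_eq_gamma:
  fixes h g' :: "real^'n^'n"
  assumes "lat_of h = lat_of g'"
  shows "\<exists>\<gamma>. (\<forall>i j. \<gamma>$i$j \<in> \<int>) \<and> g' = h ** \<gamma>"
proof -
  have "\<forall>j. \<exists>z. (\<forall>i. z$i \<in> \<int>) \<and> g' *v axis j 1 = h *v z"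
  proof
    fix j
    have "g' *v axis j 1 \<in> lat_of g'" unfolding lat_of_def using axis_int by blast
    then have "g' *v axis j 1 \<in> lat_of h" using assms by simp
    then show "\<exists>z. (\<forall>i. z$i \<in> \<int>) \<and> g' *v axis j 1 = h *v z"
      unfolding lat_of_def by blast
  qed
  then obtain Z where Z: "\<And>j. (\<forall>i. Z j $i \<in> \<int>)" "\<And>j. g' *v axis j 1 = h *v Z j" by metis
  define \<gamma> where "\<gamma> = (\<chi> i j. Z j $ i)"
  have "g' = h ** \<gamma>"
  proof (rule vec_eq_iff[THEN iffD2], intro allI, rule vec_eq_iff[THEN iffD2], intro allI)
    fix i j
    have "g' $ i $ j = (h *v Z j) $ i" using Z(2)[of j] mvec_axis[of g' j i] by simp
    then show "g' $ i $ j = (h ** \<gamma>) $ i $ j"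
      by (simp add: \<gamma>_def matrix_vector_mult_def matrix_matrix_mult_def)
  qed
  then show ?thesis using Z(1) by (intro exI[of _ \<gamma>]) (simp add: \<gamma>_def)
qed

lemma lat_int_mult:
  fixes h \<gamma> :: "real^'n^'n"
  assumes "\<forall>i j. \<gamma>$i$j \<in> \<int>"
  shows "lat_of (h ** \<gamma>) \<subseteq> lat_of h"
proof
  fix u assume "u \<in> lat_of (h ** \<gamma>)"
  then obtain z where z: "\<forall>i. z$i \<in> \<int>" "u = (h ** \<gamma>) *v z" unfolding lat_of_def by auto
  have "\<forall>i. (\<gamma> *v z) $ i \<in> \<int>"
    using assms z(1) by (auto simp: matrix_vector_mult_def intro!: Ints_mult)
  moreover have "u = h *v (\<gamma> *v z)" using z(2) by (simp add: matrix_vector_mul_assoc)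
  ultimately show "u \<in> lat_of h" unfolding lat_of_def by blast
qed

lemma inv_cancel:
  fixes h a :: "real^'n^'n"
  assumes "det h = 1" "h = h ** a"
  shows "a = mat 1"
proof -
  have "invertible h" using assms by (simp add: invertible_det_nz)
  then obtain B where B: "B ** h = mat 1" using invertible_left_inverse by blast
  have "B ** h = B ** (h ** a)" using assms(2) by simp
  also have "\<dots> = a" by (simp add: matrix_mul_assoc B)
  finally show ?thesis using B by simp
qed

lemma open_ball_lat:
  fixes g0 :: "real^'k^'k"
  shows "openin Xtop (lat_of ` (ball g0 r \<inter> SLR))"
proof -
  define G where "G = {\<gamma>::real^'k^'k. (\<forall>i j. \<gamma>$i$j \<in> \<int>) \<and> det \<gamma> = 1 \<and>
      (\<exists>\<gamma>'. (\<forall>i j. \<gamma>'$i$j \<in> \<int>) \<and> \<gamma> ** \<gamma>' = mat 1)}"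
  define T where "T = (\<Union>\<gamma>\<in>G. (\<lambda>h. h ** \<gamma>) -` ball g0 r)"
  have oT: "open T" unfolding T_def by (intro open_UN ballI open_vimage open_ball mult_cont)
  have eq: "{h \<in> SLR. lat_of h \<in> lat_of ` (ball g0 r \<inter> SLR)} = T \<inter> SLR"
  proof (intro equalityI subsetI)
    fix h assume "h \<in> {h \<in> SLR. lat_of h \<in> lat_of ` (ball g0 r \<inter> SLR)}"
    then obtain g' where h: "det h = 1" and g': "g' \<in> ball g0 r" "det g' = 1" "lat_of h = lat_of g'"
      by (auto simp: SLR_def)
    obtain \<gamma> where \<gamma>: "\<forall>i j. \<gamma>$i$j \<in> \<int>" "g' = h ** \<gamma>" using lat_eq_gamma[OF g'(3)] by blast
    obtain \<gamma>' where \<gamma>': "\<forall>i j. \<gamma>'$i$j \<in> \<int>" "h = g' ** \<gamma>'" using lat_eq_gamma[OF g'(3)[symmetric]] by blast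
    have "h = h ** (\<gamma> ** \<gamma>')" using \<gamma>(2) \<gamma>'(2) by (simp add: matrix_mul_assoc)
    then have "\<gamma> ** \<gamma>' = mat 1" using inv_cancel h by blast
    moreover have "det \<gamma> = 1" using \<gamma>(2) g'(2) h by (simp add: det_mul)
    ultimately have "\<gamma> \<in> G" using \<gamma>(1) \<gamma>'(1) unfolding G_def by blast
    then show "h \<in> T \<inter> SLR" using h \<gamma>(2) g'(1) unfolding T_def SLR_def by auto
  next
    fix h assume "h \<in> T \<inter> SLR"
    then obtain \<gamma> \<gamma>' where h: "det h = 1" and \<gamma>: "\<forall>i j. \<gamma>$i$j \<in> \<int>" "det \<gamma> = 1"
       "\<forall>i j. \<gamma>'$i$j \<in> \<int>" "\<gamma> ** \<gamma>' = mat 1" and b: "h ** \<gamma> \<in> ball g0 r"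
      unfolding T_def G_def SLR_def by auto
    have "lat_of (h ** \<gamma>) \<subseteq> lat_of h" by (rule lat_int_mult[OF \<gamma>(1)])
    moreover have "lat_of ((h ** \<gamma>) ** \<gamma>') \<subseteq> lat_of (h ** \<gamma>)" by (rule lat_int_mult[OF \<gamma>(3)])
    moreover have "(h ** \<gamma>) ** \<gamma>' = h" using \<gamma>(4) by (simp add: matrix_mul_assoc[symmetric])
    ultimately have "lat_of h = lat_of (h ** \<gamma>)" by auto
    moreover have "h ** \<gamma> \<in> SLR" using h \<gamma>(2) by (simp add: SLR_def det_mul)
    ultimately show "h \<in> {h \<in> SLR. lat_of h \<in> lat_of ` (ball g0 r \<inter> SLR)}"
      using b h by (auto simp: SLR_def)
  qed
  show ?thesis
    unfolding Xtop_def openin_quotient_topology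
  proof (intro conjI)
    show "lat_of ` (ball g0 r \<inter> SLR) \<subseteq> lat_of ` topspace (subtopology euclidean SLR)"
      by auto
    have "openin (subtopology euclidean SLR) (T \<inter> SLR)"
      unfolding openin_subtopology using oT by (auto simp: open_openin[symmetric])
    then show "openin (subtopology euclidean SLR) {x \<in> topspace (subtopology euclidean SLR).
       lat_of x \<in> lat_of ` (ball g0 r \<inter> SLR)}" using eq by simp
  qed
qed

lemma closure_seq:
  fixes g0 :: "real^'k^'k"
  assumes "g0 \<in> SLR" "lat_of g0 \<in> Xtop closure_of S"
  shows "\<exists>h. (\<forall>k. h k \<in> SLR \<and> lat_of (h k) \<in> S) \<and> h \<longlonglongrightarrow> g0"
proof -
  have "\<forall>k. \<exists>h'. h' \<in> SLR \<and> lat_of h' \<in> S \<and> dist g0 h' < inverse (real (Suc k))"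
  proof
    fix k
    have m: "lat_of g0 \<in> lat_of ` (ball g0 (inverse (real (Suc k))) \<inter> SLR)"
      using assms(1) by auto
    have o: "openin Xtop (lat_of ` (ball g0 (inverse (real (Suc k))) \<inter> SLR))"
      by (rule open_ball_lat)
    have c: "\<forall>T. lat_of g0 \<in> T \<and> openin Xtop T \<longrightarrow> (\<exists>y. y \<in> S \<and> y \<in> T)"
      using assms(2) by (simp add: in_closure_of)
    obtain y where y: "y \<in> S" "y \<in> lat_of ` (ball g0 (inverse (real (Suc k))) \<inter> SLR)"
      using c[rule_format, OF conjI[OF m o]] by blast
    obtain h' where "h' \<in> ball g0 (inverse (real (Suc k))) \<inter> SLR" "y = lat_of h'"
      using y(2) by blast
    then show "\<exists>h'. h' \<in> SLR \<and> lat_of h' \<in> S \<and> dist g0 h' < inverse (real (Suc k))"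
      using y(1) by auto
  qed
  then obtain h where h: "\<And>k. h k \<in> SLR \<and> lat_of (h k) \<in> S \<and> dist g0 (h k) < inverse (real (Suc k))"
    by metis
  have "h \<longlonglongrightarrow> g0"
  proof (rule metric_LIMSEQ_I)
    fix r :: real assume "0 < r"
    then obtain n where n: "inverse (real (Suc n)) < r" using reals_Archimedean by blast
    have "\<forall>k\<ge>n. dist (h k) g0 < r"
    proof (intro allI impI)
      fix k assume "n \<le> k"
      then have "inverse (real (Suc k)) \<le> inverse (real (Suc n))" by (simp add: le_imp_inverse_le)
      moreover have "dist (h k) g0 < inverse (real (Suc k))" using h[of k] by (simp add: dist_commute)
      ultimately show "dist (h k) g0 < r" using n by linarith
    qed
    then show "\<exists>no. \<forall>k\<ge>no. dist (h k) g0 < r" by blast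
  qed
  then show ?thesis using h by blast
qed


lemma grid_mem: "(\<forall>i. z$i \<in> \<int>) \<Longrightarrow> g *v z + w \<in> grid g w"
  unfolding grid_def lat_of_def by blast

lemma grid_ne: "grid g w \<noteq> {}"
  using grid_mem[of 0 g w] by auto

lemma Ngrid_set_bdd: "bdd_below {\<bar>Nvec u\<bar> | u. u \<in> y}"
  by (rule bdd_belowI[of _ 0]) auto

lemma Ngrid_le: "(\<forall>i. z$i \<in> \<int>) \<Longrightarrow> Ngrid (grid g w) \<le> \<bar>Nvec (g *v z + w)\<bar>"
  unfolding Ngrid_def by (rule cInf_lower[OF _ Ngrid_set_bdd]) (use grid_mem in blast)

lemma Ngrid_nonneg: "0 \<le> Ngrid (grid g w)"
  unfolding Ngrid_def by (rule cInf_greatest) (use grid_ne in auto)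

lemma Ngrid_lessD:
  assumes "Ngrid (grid g w) < c"
  shows "\<exists>z. (\<forall>i. z$i \<in> \<int>) \<and> \<bar>Nvec (g *v z + w)\<bar> < c"
proof -
  have "{\<bar>Nvec u\<bar> | u. u \<in> grid g w} \<noteq> {}" using grid_ne by auto
  from cInf_lessD[OF this] assms obtain t where "t \<in> {\<bar>Nvec u\<bar> | u. u \<in> grid g w}" "t < c"
    unfolding Ngrid_def by blast
  then show ?thesis unfolding grid_def lat_of_def by auto
qed

lemma L_char:
  "is_L g v \<longleftrightarrow> (\<forall>e>0. \<exists>z (n::int). (\<forall>i. z$i \<in> \<int>) \<and> n \<noteq> 0 \<and>
       \<bar>of_int n * Nvec (g *v z + of_int n *\<^sub>R v)\<bar> < e)"
proof -
  define S where "S = {\<bar>real_of_int n * Ngrid (grid g (of_int n *\<^sub>R v))\<bar> | n::int. n \<noteq> 0}"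
  have Sne: "S \<noteq> {}" unfolding S_def by (auto intro: exI[of _ 1])
  have Sbdd: "bdd_below S" unfolding S_def by (rule bdd_belowI[of _ 0]) auto
  have S0: "0 \<le> Inf S" using Sne by (rule cInf_greatest) (auto simp: S_def)
  have iff: "is_L g v \<longleftrightarrow> Inf S = 0" unfolding is_L_def S_def ..
  show ?thesis
  proof
    assume "is_L g v"
    then have I: "Inf S = 0" using iff by simp
    show "\<forall>e>0. \<exists>z (n::int). (\<forall>i. z$i \<in> \<int>) \<and> n \<noteq> 0 \<and>
       \<bar>of_int n * Nvec (g *v z + of_int n *\<^sub>R v)\<bar> < e"
    proof (intro allI impI)
      fix e :: real assume e: "0 < e"
      then obtain s where "s \<in> S" "s < e" using cInf_lessD[OF Sne] I by auto
      then obtain n :: int where n: "n \<noteq> 0" "\<bar>real_of_int n * Ngrid (grid g (of_int n *\<^sub>R v))\<bar> < e"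
        unfolding S_def by auto
      have pos: "0 < \<bar>real_of_int n\<bar>" using n(1) by simp
      have "\<bar>real_of_int n\<bar> * Ngrid (grid g (of_int n *\<^sub>R v)) < e"
        using n(2) by (simp add: abs_mult abs_of_nonneg[OF Ngrid_nonneg])
      then have "Ngrid (grid g (of_int n *\<^sub>R v)) < e / \<bar>real_of_int n\<bar>"
        using pos by (simp add: field_simps)
      then obtain z where z: "\<forall>i. z$i \<in> \<int>" "\<bar>Nvec (g *v z + of_int n *\<^sub>R v)\<bar> < e / \<bar>real_of_int n\<bar>"
        using Ngrid_lessD by blast
      have "\<bar>of_int n * Nvec (g *v z + of_int n *\<^sub>R v)\<bar> < e"
        using z(2) pos by (simp add: abs_mult field_simps)
      then show "\<exists>z (n::int). (\<forall>i. z$i \<in> \<int>) \<and> n \<noteq> 0 \<and>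
         \<bar>of_int n * Nvec (g *v z + of_int n *\<^sub>R v)\<bar> < e" using z(1) n(1) by blast
    qed
  next
    assume H: "\<forall>e>0. \<exists>z (n::int). (\<forall>i. z$i \<in> \<int>) \<and> n \<noteq> 0 \<and>
       \<bar>of_int n * Nvec (g *v z + of_int n *\<^sub>R v)\<bar> < e"
    have "\<not> 0 < Inf S"
    proof
      assume p: "0 < Inf S"
      then obtain z and n :: int where z: "\<forall>i. z$i \<in> \<int>" "n \<noteq> 0"
        "\<bar>of_int n * Nvec (g *v z + of_int n *\<^sub>R v)\<bar> < Inf S" using H by blast
      have "\<bar>real_of_int n * Ngrid (grid g (of_int n *\<^sub>R v))\<bar> \<in> S" using z(2) unfolding S_def by blast
      then have "Inf S \<le> \<bar>real_of_int n * Ngrid (grid g (of_int n *\<^sub>R v))\<bar>"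
        using cInf_lower Sbdd by blast
      also have "\<dots> = \<bar>real_of_int n\<bar> * Ngrid (grid g (of_int n *\<^sub>R v))"
        by (simp add: abs_mult abs_of_nonneg[OF Ngrid_nonneg])
      also have "\<dots> \<le> \<bar>real_of_int n\<bar> * \<bar>Nvec (g *v z + of_int n *\<^sub>R v)\<bar>"
        by (rule mult_left_mono[OF Ngrid_le[OF z(1)]]) simp
      also have "\<dots> < Inf S" using z(3) by (simp add: abs_mult)
      finally show False by simp
    qed
    then show "is_L g v" using iff S0 by simp
  qed
qed


lemma mv_tendsto:
  fixes A :: "'b \<Rightarrow> real^'n^'m"
  assumes "(A \<longlongrightarrow> A0) F" "(x \<longlongrightarrow> x0) F"
  shows "((\<lambda>k. A k *v x k) \<longlongrightarrow> A0 *v x0) F"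
  by (rule vec_tendstoI) (auto simp: matrix_vector_mult_def intro!: tendsto_intros assms)

lemma Nvec_tendsto:
  assumes "(u \<longlongrightarrow> u0) F"
  shows "((\<lambda>k. Nvec (u k)) \<longlongrightarrow> Nvec u0) F"
  unfolding Nvec_def by (intro tendsto_intros assms)

lemma Xtop_topspace: "topspace Xtop = lat_of ` SLR"
proof
  have ot: "openin Xtop (topspace Xtop)" by simp
  have "topspace Xtop \<subseteq> lat_of ` topspace (subtopology euclidean SLR)"
    using conjunct1[OF ot[unfolded Xtop_def openin_quotient_topology]] by (simp add: Xtop_def)
  then show "topspace Xtop \<subseteq> lat_of ` SLR" by simp
  have e: "{x \<in> SLR. lat_of x \<in> lat_of ` SLR} = SLR" by blast
  have o: "openin (top_of_set SLR) SLR" by (metis openin_topspace topspace_euclidean_subtopology)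
  have o2: "openin (top_of_set SLR) {x \<in> SLR. lat_of x \<in> lat_of ` SLR}"
    by (subst e) (rule o)
  have "openin Xtop (lat_of ` SLR)"
    unfolding Xtop_def openin_quotient_topology using o2 by simp
  then show "lat_of ` SLR \<subseteq> topspace Xtop" by (rule openin_subset)
qed

lemma Adiag_D:
  assumes "D \<in> Adiag"
  shows "\<exists>a. (\<forall>i. a$i > 0) \<and> (\<forall>u i. (D *v u) $ i = a$i * u$i) \<and> (\<forall>u. Nvec (D *v u) = Nvec u)"
proof -
  obtain a where a: "D = (\<chi> i j. if i = j then a $ i else 0)" "\<forall>i. a $ i > 0" "(\<Prod>i\<in>UNIV. a $ i) = 1"
    using assms unfolding Adiag_def by blast
  have mv: "\<And>u i. (D *v u) $ i = a$i * u$i"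
    unfolding a(1) matrix_vector_mult_def by (simp add: if_distrib[of "\<lambda>x. x * y" for y] cong: if_cong)
  have "\<And>u. Nvec (D *v u) = Nvec u"
    unfolding Nvec_def mv by (simp add: prod.distrib a(3))
  then show ?thesis using mv a(2) by blast
qed

lemma sum_option: "(\<Sum>i\<in>(UNIV::'a::finite option set). f i) = f None + (\<Sum>i\<in>UNIV. f (Some i))"
  by (simp add: UNIV_option_conv sum.reindex)

lemma prod_option: "(\<Prod>i\<in>(UNIV::'a::finite option set). f i) = f None * (\<Prod>i\<in>UNIV. f (Some i))"
  by (simp add: UNIV_option_conv prod.reindex)

lemma tau_None: "(tau_mat g v *v z) $ None = z $ None"
  by (simp add: matrix_vector_mult_def tau_mat_def sum_option)

lemma tau_Some: "(tau_mat g v *v z) $ Some i = (g *v (\<chi> j. z $ Some j) + z $ None *\<^sub>R v) $ i"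
  by (simp add: matrix_vector_mult_def tau_mat_def sum_option)

lemma Nvec_option: "Nvec (u :: real^('d::finite) option) = Nvec (\<chi> i. u $ Some i) * u $ None"
  unfolding Nvec_def by (simp add: prod_option)


lemma tau_vec:
  "tau_mat g v *v z = u \<Longrightarrow> u $ None = z $ None \<and>
     Nvec u = Nvec (g *v (\<chi> j. z $ Some j) + z $ None *\<^sub>R v) * z $ None"
proof -
  assume u: "tau_mat g v *v z = u"
  have "(\<chi> i. u $ Some i) = g *v (\<chi> j. z $ Some j) + z $ None *\<^sub>R v"
    using tau_Some[of g v z] u by (simp add: vec_eq_iff)
  then show ?thesis using u tau_None[of g v z] Nvec_option[of u] by simp
qed

lemma L_tau:
  "is_L g v \<longleftrightarrow> (\<forall>e>0. \<exists>u\<in>tau g v. u $ None \<noteq> 0 \<and> \<bar>Nvec u\<bar> < e)"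
proof
  assume "is_L g v"
  then have H: "\<forall>e>0. \<exists>z (n::int). (\<forall>i. z$i \<in> \<int>) \<and> n \<noteq> 0 \<and>
       \<bar>of_int n * Nvec (g *v z + of_int n *\<^sub>R v)\<bar> < e" by (simp add: L_char)
  show "\<forall>e>0. \<exists>u\<in>tau g v. u $ None \<noteq> 0 \<and> \<bar>Nvec u\<bar> < e"
  proof (intro allI impI)
    fix e :: real assume "0 < e"
    then obtain z and n :: int where z: "\<forall>i. z$i \<in> \<int>" "n \<noteq> 0"
       "\<bar>of_int n * Nvec (g *v z + of_int n *\<^sub>R v)\<bar> < e" using H by blast
    define zz :: "real^('a option)" where "zz = (\<chi> i. case i of Some j \<Rightarrow> z $ j | None \<Rightarrow> of_int n)"
    have zzi: "\<forall>i. zz $ i \<in> \<int>" using z(1) by (auto simp: zz_def split: option.split)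
    have zzs: "(\<chi> j. zz $ Some j) = z" by (simp add: zz_def vec_eq_iff)
    define u where "u = tau_mat g v *v zz"
    have u: "u $ None = of_int n" "Nvec u = Nvec (g *v z + of_int n *\<^sub>R v) * of_int n"
      using tau_vec[OF u_def[symmetric]] by (simp_all add: zzs zz_def)
    have "u \<in> tau g v" unfolding tau_def lat_of_def u_def using zzi by blast
    then show "\<exists>u\<in>tau g v. u $ None \<noteq> 0 \<and> \<bar>Nvec u\<bar> < e"
      using u z(2,3) by (intro bexI[of _ u]) (auto simp: mult.commute)
  qed
next
  assume H: "\<forall>e>0. \<exists>u\<in>tau g v. u $ None \<noteq> 0 \<and> \<bar>Nvec u\<bar> < e"
  show "is_L g v" unfolding L_char
  proof (intro allI impI)
    fix e :: real assume "0 < e"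
    then obtain u where u: "u \<in> tau g v" "u $ None \<noteq> 0" "\<bar>Nvec u\<bar> < e" using H by blast
    then obtain zz where zz: "\<forall>i. zz $ i \<in> \<int>" "u = tau_mat g v *v zz"
      unfolding tau_def lat_of_def by blast
    obtain n where n: "zz $ None = of_int n" using zz(1) Ints_cases by metis
    have t: "u $ None = of_int n" "Nvec u = Nvec (g *v (\<chi> j. zz $ Some j) + of_int n *\<^sub>R v) * of_int n"
      using tau_vec[OF zz(2)[symmetric]] n by simp_all
    have "\<forall>i. (\<chi> j. zz $ Some j) $ i \<in> \<int>" using zz(1) by simp
    moreover have "n \<noteq> 0" using t(1) u(2) by simp
    ultimately show "\<exists>z (n::int). (\<forall>i. z$i \<in> \<int>) \<and> n \<noteq> 0 \<and>
       \<bar>of_int n * Nvec (g *v z + of_int n *\<^sub>R v)\<bar> < e"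
      using t(2) u(3) by (metis mult.commute)
  qed
qed


definition Qp :: "real^'d^'d \<Rightarrow> real^'d \<Rightarrow> real \<Rightarrow> bool" where
  "Qp h w e \<longleftrightarrow> (\<forall>z (n::int). (\<forall>i. z$i \<in> \<int>) \<and> n \<noteq> 0 \<longrightarrow>
      e \<le> \<bar>of_int n * Nvec (h *v z + of_int n *\<^sub>R w)\<bar>)"

lemma notL_Qp:
  fixes g :: "real^'d^'d"
  assumes "\<not> is_L g v" shows "\<exists>e>0. Qp g v e"
proof -
  obtain e :: real where e: "e > 0" and H: "\<not> (\<exists>(z::real^'d) (n::int). (\<forall>i. z$i \<in> \<int>) \<and> n \<noteq> 0 \<and>
       \<bar>of_int n * Nvec (g *v z + of_int n *\<^sub>R v)\<bar> < e)"
    using assms unfolding L_char by blast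
  have "Qp g v e" unfolding Qp_def
  proof (intro allI impI)
    fix z :: "real^'d" and n :: int assume "(\<forall>i. z$i \<in> \<int>) \<and> n \<noteq> 0"
    then have "\<not> \<bar>of_int n * Nvec (g *v z + of_int n *\<^sub>R v)\<bar> < e" using H by blast
    then show "e \<le> \<bar>of_int n * Nvec (g *v z + of_int n *\<^sub>R v)\<bar>" by simp
  qed
  then show ?thesis using e by blast
qed

lemma Qp_notL:
  fixes g :: "real^'d^'d"
  assumes Q: "Qp g v e" and e: "e > 0" shows "\<not> is_L g v"
proof
  assume "is_L g v"
  then obtain z :: "real^'d" and n :: int where z: "(\<forall>i. z$i \<in> \<int>)" "n \<noteq> 0"
       "\<bar>of_int n * Nvec (g *v z + of_int n *\<^sub>R v)\<bar> < e"
    using e unfolding L_char by blast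
  moreover have "e \<le> \<bar>of_int n * Nvec (g *v z + of_int n *\<^sub>R v)\<bar>"
    using Q z(1,2) unfolding Qp_def by blast
  ultimately show False by simp
qed

lemma Qp_diag:
  fixes g D :: "real^'d^'d"
  assumes "D \<in> Adiag" "Qp g v e"
  shows "Qp (D ** g) (D *v v) e"
proof -
  obtain a where a: "\<forall>u. Nvec (D *v u) = Nvec u" using Adiag_D[OF assms(1)] by blast
  have "\<And>(z::real^'d) (n::real). (D ** g) *v z + n *\<^sub>R (D *v v) = D *v (g *v z + n *\<^sub>R v)"
    by (simp add: matrix_vector_mul_assoc[symmetric] matrix_vector_right_distrib matrix_vector_mult_scaleR)
  then show ?thesis using assms(2) a unfolding Qp_def by simp
qed

lemma Qp_lat:
  fixes h h' :: "real^'d^'d"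
  assumes "lat_of h = lat_of h'" "Qp h w e"
  shows "Qp h' w e"
  unfolding Qp_def
proof (intro allI impI)
  fix z :: "real^'d" and n :: int assume z: "(\<forall>i. z$i \<in> \<int>) \<and> n \<noteq> 0"
  have "h' *v z \<in> lat_of h'" using z unfolding lat_of_def by blast
  then have "h' *v z \<in> lat_of h" using assms(1) by simp
  then obtain z' where z': "\<forall>i. z'$i \<in> \<int>" "h' *v z = h *v z'" unfolding lat_of_def by blast
  have "e \<le> \<bar>of_int n * Nvec (h *v z' + of_int n *\<^sub>R w)\<bar>"
    using assms(2) z z'(1) unfolding Qp_def by blast
  then show "e \<le> \<bar>of_int n * Nvec (h' *v z + of_int n *\<^sub>R w)\<bar>" using z'(2) by simp
qed

lemma Qp_shift:
  fixes h :: "real^'d^'d"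
  assumes "\<forall>i. z0$i \<in> \<int>" "Qp h w e"
  shows "Qp h (w + h *v z0) e"
  unfolding Qp_def
proof (intro allI impI)
  fix z :: "real^'d" and n :: int assume z: "(\<forall>i. z$i \<in> \<int>) \<and> n \<noteq> 0"
  have eq: "h *v z + of_int n *\<^sub>R (w + h *v z0) = h *v (z + of_int n *\<^sub>R z0) + of_int n *\<^sub>R w"
    by (simp add: matrix_vector_right_distrib matrix_vector_mult_scaleR algebra_simps)
  have "\<forall>i. (z + of_int n *\<^sub>R z0) $ i \<in> \<int>" using z assms(1) by auto
  then show "e \<le> \<bar>of_int n * Nvec (h *v z + of_int n *\<^sub>R (w + h *v z0))\<bar>"
    using assms(2) z unfolding Qp_def eq by blast
qed

lemma Qp_lim:
  fixes h :: "nat \<Rightarrow> real^'d^'d"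
  assumes "h \<longlonglongrightarrow> h0" "w \<longlonglongrightarrow> w0" "\<forall>k. Qp (h k) (w k) e"
  shows "Qp h0 w0 e"
  unfolding Qp_def
proof (intro allI impI)
  fix z :: "real^'d" and n :: int assume z: "(\<forall>i. z$i \<in> \<int>) \<and> n \<noteq> 0"
  have "(\<lambda>k. \<bar>of_int n * Nvec (h k *v z + of_int n *\<^sub>R w k)\<bar>) \<longlonglongrightarrow> \<bar>of_int n * Nvec (h0 *v z + of_int n *\<^sub>R w0)\<bar>"
    by (intro tendsto_intros Nvec_tendsto mv_tendsto assms(1,2))
  moreover have "\<forall>k. e \<le> \<bar>of_int n * Nvec (h k *v z + of_int n *\<^sub>R w k)\<bar>"
    using assms(3) z unfolding Qp_def by blast
  ultimately show "e \<le> \<bar>of_int n * Nvec (h0 *v z + of_int n *\<^sub>R w0)\<bar>"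
    by (intro LIMSEQ_le_const) auto
qed


lemma part1:
  fixes g g0 :: "real^'d^'d" and v v0 :: "real^'d"
  assumes cl: "tau g0 v0 \<in> Xtop closure_of (orbitA (tau g v))" and L0: "is_L g0 v0"
  shows "is_L g v"
proof -
  have "tau g0 v0 \<in> topspace Xtop" using cl by (simp add: in_closure_of)
  then obtain G0 where G0: "G0 \<in> SLR" "tau g0 v0 = lat_of G0" by (auto simp: Xtop_topspace)
  obtain h where h: "\<forall>k. h k \<in> SLR \<and> lat_of (h k) \<in> orbitA (tau g v)" "h \<longlonglongrightarrow> G0"
    using closure_seq[OF G0(1)] cl G0(2) by metis
  show ?thesis unfolding L_tau
  proof (intro allI impI)
    fix e :: real assume "0 < e"
    then obtain u0 where u0: "u0 \<in> tau g0 v0" "u0 $ None \<noteq> 0" "\<bar>Nvec u0\<bar> < e"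
      using L0 unfolding L_tau by blast
    obtain z0 where z0: "\<forall>i. z0 $ i \<in> \<int>" "u0 = G0 *v z0"
      using u0(1) G0(2) unfolding lat_of_def by auto
    have lim: "(\<lambda>k. h k *v z0) \<longlonglongrightarrow> u0"
      using mv_tendsto[OF h(2) tendsto_const] z0(2) by simp
    have ev1: "eventually (\<lambda>k. (h k *v z0) $ None \<noteq> 0) sequentially"
      using tendsto_imp_eventually_ne[OF tendsto_vec_nth[OF lim] u0(2)] .
    have ev2: "eventually (\<lambda>k. \<bar>Nvec (h k *v z0)\<bar> < e) sequentially"
      using order_tendstoD(2)[OF tendsto_rabs[OF Nvec_tendsto[OF lim]] u0(3)] .
    obtain N where N: "(h N *v z0) $ None \<noteq> 0" "\<bar>Nvec (h N *v z0)\<bar> < e"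
      using eventually_conj[OF ev1 ev2] unfolding eventually_sequentially by blast
    obtain D where D: "D \<in> Adiag" "lat_of (h N) = act D (tau g v)"
      using h(1) unfolding orbitA_def by blast
    have "h N *v z0 \<in> lat_of (h N)" using z0(1) unfolding lat_of_def by blast
    then obtain u where u: "u \<in> tau g v" "h N *v z0 = D *v u"
      using D(2) unfolding act_def by blast
    obtain a where a: "\<forall>i. a$i > 0" "\<forall>u i. (D *v u) $ i = a$i * u$i" "\<forall>u. Nvec (D *v u) = Nvec u"
      using Adiag_D[OF D(1)] by blast
    have "u $ None \<noteq> 0" using N(1) u(2) a(2) by auto
    moreover have "\<bar>Nvec u\<bar> < e" using N(2) u(2) a(3) by simp
    ultimately show "\<exists>u\<in>tau g v. u $ None \<noteq> 0 \<and> \<bar>Nvec u\<bar> < e" using u(1) by blast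
  qed
qed


lemma part2:
  fixes x x0 :: "(real^'d) set"
  assumes x0X: "x0 \<in> Xspace" and cl: "x0 \<in> Xtop closure_of (orbitA x)" and GL0: "is_GL x0"
  shows "is_GL x"
  unfolding is_GL_def
proof (intro allI impI)
  fix g :: "real^'d^'d" and v :: "real^'d"
  assume gx: "det g = 1 \<and> lat_of g = x"
  show "is_L g v"
  proof (rule ccontr)
    assume "\<not> is_L g v"
    then obtain e where e: "e > 0" "Qp g v e" using notL_Qp by blast
    obtain g0 where g0: "g0 \<in> SLR" "x0 = lat_of g0" using x0X unfolding Xspace_def by blast
    obtain h where h: "\<forall>k. h k \<in> SLR \<and> lat_of (h k) \<in> orbitA x" "h \<longlonglongrightarrow> g0"
      using closure_seq[OF g0(1)] cl g0(2) by metis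
    have "\<forall>k. \<exists>D. D \<in> Adiag \<and> lat_of (h k) = act D x" using h(1) unfolding orbitA_def by blast
    then obtain Dk where Dk: "\<And>k. Dk k \<in> Adiag" "\<And>k. lat_of (h k) = act (Dk k) x" by metis
    have Q1: "Qp (h k) (Dk k *v v) e" for k
    proof -
      have "lat_of (Dk k ** g) = lat_of (h k)" using Dk(2)[of k] gx act_lat[of "Dk k" g] by simp
      then show ?thesis using Qp_lat Qp_diag[OF Dk(1) e(2)] by blast
    qed
    have "\<forall>k. \<exists>B. h k ** B = mat 1"
      using h(1) invertible_right_inverse invertible_det_nz unfolding SLR_def by fastforce
    then obtain Bk where Bk: "\<And>k. h k ** Bk k = mat 1" by metis
    define s where "s k = Bk k *v (Dk k *v v)" for k
    define z :: "nat \<Rightarrow> real^'d" where "z k = (\<chi> i. - of_int \<lfloor>s k $ i\<rfloor>)" for k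
    define t where "t k = s k + z k" for k
    have zi: "\<forall>i. z k $ i \<in> \<int>" for k by (simp add: z_def)
    have ht: "h k *v t k = Dk k *v v + h k *v z k" for k
    proof -
      have "h k *v s k = (h k ** Bk k) *v (Dk k *v v)" by (simp add: s_def matrix_vector_mul_assoc matrix_mul_assoc)
      then have "h k *v s k = Dk k *v v" by (simp add: Bk)
      then show ?thesis by (simp add: t_def matrix_vector_right_distrib)
    qed
    have Q2: "Qp (h k) (h k *v t k) e" for k
      unfolding ht using Qp_shift[OF zi Q1] .
    have tb: "t k \<in> cbox 0 1" for k
      unfolding mem_box_cart t_def z_def
      by (auto simp: algebra_simps) linarith+
    then have "bounded (range t)" by (meson bounded_cbox bounded_subset image_subsetI)
    then obtain t0 r where r: "strict_mono r" "(t \<circ> r) \<longlonglongrightarrow> t0"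
      using bounded_imp_convergent_subsequence by blast
    have hr: "(h \<circ> r) \<longlonglongrightarrow> g0" using LIMSEQ_subseq_LIMSEQ[OF h(2) r(1)] .
    have wr: "(\<lambda>k. (h \<circ> r) k *v (t \<circ> r) k) \<longlonglongrightarrow> g0 *v t0" by (rule mv_tendsto[OF hr r(2)])
    have "Qp g0 (g0 *v t0) e"
      by (rule Qp_lim[OF hr wr]) (simp add: Q2)
    then have "\<not> is_L g0 (g0 *v t0)" using Qp_notL e(1) by blast
    moreover have "is_L g0 (g0 *v t0)" using GL0 g0 unfolding is_GL_def SLR_def by blast
    ultimately show False by blast
  qed
qed

theorem proposition2p1:
  fixes g g0 :: "real^'d^'d" and v v0 :: "real^'d" and x x0 :: "(real^'d) set"
  assumes "CARD('d) \<ge> 2"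
  shows "(det g = 1 \<and> det g0 = 1 \<and>
          tau g0 v0 \<in> Xtop closure_of (orbitA (tau g v)) \<and> is_L g0 v0
          \<longrightarrow> is_L g v)
       \<and> (x \<in> Xspace \<and> x0 \<in> Xspace \<and>
          x0 \<in> Xtop closure_of (orbitA x) \<and> is_GL x0
          \<longrightarrow> is_GL x)"
  using part1 part2 by blast

end
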